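(* Let $\mathbf C$ be a finite-type chain complex of real inner product spaces, let $I^\Delta$ be a Hodge basis, and let $M^\Delta$ be the Hodge matching on $(\mathbf C,I^\Delta)$. Then $M^\Delta$ is a Morse matching, the critical cells of degree $n$ span $\operatorname{Ker}\Delta_n$ for every $n$ (where $\Delta$ is the combinatorial Laplacian of $\mathbf C$), and the boundary operator of the Morse complex $\mathbf C^{M^\Delta}$ is zero.
   Context: $\mathbf C$ is a chain complex $(\mathbf C,\partial)$ of finite-dimensional real inner product spaces $\mathbf C_n$, $n\ge0$; $\partial^\dagger$ is the adjoint and $\Delta_n=\partial_n^\dagger\partial_n+\partial_{n+1}\partial_{n+1}^\dagger$. A Hodge basis: in each degree choose, via singular value decompositions, orthonormal bases $\mathcal R_+(\partial_m)$ of $\operatorname{Im}\partial_m^\dagger\subseteq\mathbf C_m$ and $\mathcal L_+(\partial_m)$ of $\operatorname{Im}\partial_m\subseteq\mathbf C_{m-1}$ with a bijection $v\mapsto w$ such that $\partial_m v=\sigma w$ with $\sigma>0$, and a basis $\mathcal B(\operatorname{Ker}\Delta_n)$; then $I^\Delta_n=\mathcal L_+(\partial_{n+1})\cup\mathcal R_+(\partial_n)\cup\mathcal B(\operatorname{Ker}\Delta_n)$, and $\mathbf C$ is based by the one-dimensional summands spanned by these vectors. The Hodge matching is $M^\Delta=\bigcup_i\{v\to w: v\in\mathcal R_+(\partial_i),w\in\mathcal L_+(\partial_i),\partial_iv=\sigma w,\sigma\ne0\}$. For a based complex with summands $C_\alpha$, $\partial_{\beta,\alpha}=\pi_\beta\partial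 i_\alpha$; the graph has an edge $\alpha\to\beta$ when $\partial_{\beta,\alpha}\ne0$; a Morse matching is an edge set $M$ with each cell on at most one edge, each $\partial_{\beta,\alpha}$ ($\alpha\to\beta\in M$) an isomorphism, and "directed path from $\alpha$ to $\beta$ in the graph with $M$ reversed" a partial order on each degree. Critical cells are unmatched ones. The Morse complex has chain groups spanned by critical cells and boundary $x\mapsto\sum_{\beta \text{ critical}}\Gamma_{\beta,\alpha}(x)$, where $\Gamma_{\beta,\alpha}$ sums, over directed paths from $\alpha$ to $\beta$ in the graph with $M$ reversed, the composite of $\partial_{\sigma_{i+1},\sigma_i}$ (ordinary steps) and $-\partial_{\sigma_i,\sigma_{i+1}}^{-1}$ (reversed matched edges). *)

theory Defs
  imports "HOL-Analysis.Analysis"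
begin

text \<open>All degrees C n are modelled as subspaces of one ambient Euclidean space 'v
  (with its inner product).  The boundary is indexed so that d n is the map
  from C (n+1) to C n, i.e. d n is the paper's boundary in degree n+1; the
  boundary in degree 0 is zero (C_{-1} = 0).\<close>

definition chain_complex :: "(nat \<Rightarrow> 'v::euclidean_space set) \<Rightarrow> (nat \<Rightarrow> 'v \<Rightarrow> 'v) \<Rightarrow> bool" where
  "chain_complex C d \<longleftrightarrow>
     (\<forall>n. subspace (C n)) \<and> (\<forall>n. linear (d n)) \<and>
     (\<forall>n. d n ` C (Suc n) \<subseteq> C n) \<and>
     (\<forall>n x. x \<in> C (Suc (Suc n)) \<longrightarrow> d n (d (Suc n) x) = 0)"

definition finite_type :: "(nat \<Rightarrow> 'v::euclidean_space set) \<Rightarrow> bool" where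
  "finite_type C \<longleftrightarrow> (\<exists>N. \<forall>n>N. C n = {0})"

definition adj :: "'v::euclidean_space set \<Rightarrow> ('v \<Rightarrow> 'v) \<Rightarrow> 'v \<Rightarrow> 'v" where
  "adj A f y = (THE z. z \<in> A \<and> (\<forall>x\<in>A. inner (f x) y = inner x z))"

definition laplacian :: "(nat \<Rightarrow> 'v::euclidean_space set) \<Rightarrow> (nat \<Rightarrow> 'v \<Rightarrow> 'v) \<Rightarrow> nat \<Rightarrow> 'v \<Rightarrow> 'v" where
  "laplacian C d n x =
     (case n of 0 \<Rightarrow> 0 | Suc k \<Rightarrow> adj (C n) (d k) (d k x)) + d n (adj (C (Suc n)) (d n) x)"

definition ker_lap :: "(nat \<Rightarrow> 'v::euclidean_space set) \<Rightarrow> (nat \<Rightarrow> 'v \<Rightarrow> 'v) \<Rightarrow> nat \<Rightarrow> 'v set" where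
  "ker_lap C d n = {x \<in> C n. laplacian C d n x = 0}"

definition orthonormal_basis_of :: "'v::euclidean_space set \<Rightarrow> 'v set \<Rightarrow> bool" where
  "orthonormal_basis_of S W \<longleftrightarrow>
     S \<subseteq> W \<and> span S = W \<and> (\<forall>x\<in>S. norm x = 1) \<and> pairwise orthogonal S"

text \<open>R k = R_+(del_{k+1}) (orthonormal basis of Im del_{k+1}^dagger, inside C (k+1)),
  L k = L_+(del_{k+1}) (orthonormal basis of Im del_{k+1}, inside C k),
  p k the bijection R k -> L k with del_{k+1} v = sigma (p k v), sigma > 0,
  B n a basis of Ker Delta_n.\<close>
definition hodge_basis ::
  "(nat \<Rightarrow> 'v::euclidean_space set) \<Rightarrow> (nat \<Rightarrow> 'v \<Rightarrow> 'v) \<Rightarrow> (nat \<Rightarrow> 'v set) \<Rightarrow> (nat \<Rightarrow> 'v set)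
    \<Rightarrow> (nat \<Rightarrow> 'v \<Rightarrow> 'v) \<Rightarrow> (nat \<Rightarrow> 'v set) \<Rightarrow> bool" where
  "hodge_basis C d R L p B \<longleftrightarrow>
     (\<forall>k. orthonormal_basis_of (R k) (adj (C (Suc k)) (d k) ` C k)
        \<and> orthonormal_basis_of (L k) (d k ` C (Suc k))
        \<and> bij_betw (p k) (R k) (L k)
        \<and> (\<forall>v\<in>R k. \<exists>\<sigma>>0. d k v = \<sigma> *\<^sub>R p k v)) \<and>
     (\<forall>n. independent (B n) \<and> span (B n) = ker_lap C d n)"

definition hodge_index :: "(nat \<Rightarrow> 'v set) \<Rightarrow> (nat \<Rightarrow> 'v set) \<Rightarrow> (nat \<Rightarrow> 'v set) \<Rightarrow> nat \<Rightarrow> 'v set" where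
  "hodge_index R L B n = L n \<union> (case n of 0 \<Rightarrow> {} | Suc k \<Rightarrow> R k) \<union> B n"

text \<open>Cells of the based complex: a cell is (degree, basis vector); the summand is
  the line spanned by the vector.\<close>
definition hodge_cells :: "(nat \<Rightarrow> 'v set) \<Rightarrow> (nat \<Rightarrow> 'v set) \<Rightarrow> (nat \<Rightarrow> 'v set) \<Rightarrow> (nat \<times> 'v) set" where
  "hodge_cells R L B = {(n, v). v \<in> hodge_index R L B n}"

text \<open>Matrix entry del_{beta,alpha} = pi_beta del i_alpha, written as a scalar with respect
  to the generating vectors: the coefficient of w in the expansion of del v in the basis
  I_m, for alpha = (m+1, v), beta = (m, w).\<close>
definition hodge_coef :: "(nat \<Rightarrow> 'v::euclidean_space \<Rightarrow> 'v) \<Rightarrow> (nat \<Rightarrow> 'v set) \<Rightarrow> (nat \<Rightarrow> 'v set)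
    \<Rightarrow> (nat \<Rightarrow> 'v set) \<Rightarrow> nat \<times> 'v \<Rightarrow> nat \<times> 'v \<Rightarrow> real" where
  "hodge_coef d R L B \<beta> \<alpha> =
     (if fst \<alpha> = Suc (fst \<beta>)
      then representation (hodge_index R L B (fst \<beta>)) (d (fst \<beta>) (snd \<alpha>)) (snd \<beta>)
      else 0)"

definition hodge_matching :: "(nat \<Rightarrow> 'v::euclidean_space \<Rightarrow> 'v) \<Rightarrow> (nat \<Rightarrow> 'v set) \<Rightarrow> (nat \<Rightarrow> 'v set)
    \<Rightarrow> ((nat \<times> 'v) \<times> (nat \<times> 'v)) set" where
  "hodge_matching d R L =
     {((Suc k, v), (k, w)) | k v w. v \<in> R k \<and> w \<in> L k \<and> (\<exists>\<sigma>. \<sigma> \<noteq> 0 \<and> d k v = \<sigma> *\<^sub>R w)}"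

text \<open>X: cells, deg: degree, c b a: the (scalar) component del_{b,a}.\<close>
definition graph_edges :: "'c set \<Rightarrow> ('c \<Rightarrow> nat) \<Rightarrow> ('c \<Rightarrow> 'c \<Rightarrow> real) \<Rightarrow> ('c \<times> 'c) set" where
  "graph_edges X deg c = {(a, b). a \<in> X \<and> b \<in> X \<and> deg a = Suc (deg b) \<and> c b a \<noteq> 0}"

definition rev_graph :: "'c set \<Rightarrow> ('c \<Rightarrow> nat) \<Rightarrow> ('c \<Rightarrow> 'c \<Rightarrow> real) \<Rightarrow> ('c \<times> 'c) set \<Rightarrow> ('c \<times> 'c) set" where
  "rev_graph X deg c M = (graph_edges X deg c - M) \<union> M\<inverse>"

definition morse_matching :: "'c set \<Rightarrow> ('c \<Rightarrow> nat) \<Rightarrow> ('c \<Rightarrow> 'c \<Rightarrow> real) \<Rightarrow> ('c \<times> 'c) set \<Rightarrow> bool" where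
  "morse_matching X deg c M \<longleftrightarrow>
     M \<subseteq> graph_edges X deg c \<and>
     (\<forall>e\<in>M. \<forall>e'\<in>M. e \<noteq> e' \<longrightarrow> {fst e, snd e} \<inter> {fst e', snd e'} = {}) \<and>
     (\<forall>(a, b)\<in>M. c b a \<noteq> 0) \<and>
     (\<forall>n. partial_order_on {a \<in> X. deg a = n}
            {(a, b). a \<in> X \<and> b \<in> X \<and> deg a = n \<and> deg b = n \<and> (a, b) \<in> (rev_graph X deg c M)\<^sup>*})"

definition critical :: "'c set \<Rightarrow> ('c \<times> 'c) set \<Rightarrow> 'c set" where
  "critical X M = {a \<in> X. \<forall>(x, y)\<in>M. a \<noteq> x \<and> a \<noteq> y}"

definition is_path :: "('c \<times> 'c) set \<Rightarrow> 'c list \<Rightarrow> 'c \<Rightarrow> 'c \<Rightarrow> bool" where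
  "is_path E p a b \<longleftrightarrow> p \<noteq> [] \<and> hd p = a \<and> last p = b \<and>
     (\<forall>i. Suc i < length p \<longrightarrow> (p ! i, p ! Suc i) \<in> E)"

definition path_weight :: "('c \<Rightarrow> 'c \<Rightarrow> real) \<Rightarrow> ('c \<times> 'c) set \<Rightarrow> 'c list \<Rightarrow> real" where
  "path_weight c M p = (\<Prod>i | Suc i < length p.
      (if (p ! Suc i, p ! i) \<in> M then - inverse (c (p ! i) (p ! Suc i)) else c (p ! Suc i) (p ! i)))"

definition Gamma :: "'c set \<Rightarrow> ('c \<Rightarrow> nat) \<Rightarrow> ('c \<Rightarrow> 'c \<Rightarrow> real) \<Rightarrow> ('c \<times> 'c) set \<Rightarrow> 'c \<Rightarrow> 'c \<Rightarrow> real" where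
  "Gamma X deg c M b a = (\<Sum>p \<in> {p. is_path (rev_graph X deg c M) p a b}. path_weight c M p)"

text \<open>Morse boundary applied to the generator of a critical cell a, given as its
  coefficient function on critical cells.\<close>
definition morse_boundary :: "'c set \<Rightarrow> ('c \<Rightarrow> nat) \<Rightarrow> ('c \<Rightarrow> 'c \<Rightarrow> real) \<Rightarrow> ('c \<times> 'c) set \<Rightarrow> 'c \<Rightarrow> 'c \<Rightarrow> real" where
  "morse_boundary X deg c M a =
     (\<lambda>b. if b \<in> critical X M \<and> deg a = Suc (deg b) then Gamma X deg c M b a else 0)"

end

theory Submission
  imports Defs
begin

lemma adj_props:
  fixes A :: "'v::euclidean_space set" and f :: "'v \<Rightarrow> 'v"
  assumes A: "subspace A" and f: "linear f"
  shows "adj A f y \<in> A \<and> (\<forall>x\<in>A. inner (f x) y = inner x (adj A f y))"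
proof -
  obtain Bs where Bs: "Bs \<subseteq> A" "pairwise orthogonal Bs" "\<And>x. x \<in> Bs \<Longrightarrow> norm x = 1"
    "independent Bs" "span Bs = A"
    using orthonormal_basis_subspace[OF A] by metis
  have fin: "finite Bs" using Bs(4) finiteI_independent by blast
  define z where "z = (\<Sum>e\<in>Bs. inner (f e) y *\<^sub>R e)"
  have zA: "z \<in> A" unfolding z_def using Bs(5)[symmetric]
    by (simp add: span_base span_scale span_sum)
  have ie: "inner e e' = (if e' = e then 1 else 0)" if "e \<in> Bs" "e' \<in> Bs" for e e'
  proof (cases "e' = e")
    case True
    then show ?thesis using Bs(3)[OF that(1)] by (simp add: power2_norm_eq_inner[symmetric])
  next
    case False
    then show ?thesis using Bs(2) that unfolding pairwise_def orthogonal_def by auto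
  qed
  have base: "inner (f e) y = inner e z" if "e \<in> Bs" for e
  proof -
    have "inner e z = (\<Sum>e'\<in>Bs. inner (f e') y * inner e e')"
      unfolding z_def by (simp add: inner_sum_right)
    also have "\<dots> = (\<Sum>e'\<in>Bs. (if e' = e then inner (f e') y else 0))"
      by (rule sum.cong) (auto simp: ie that)
    also have "\<dots> = inner (f e) y" using fin that by simp
    finally show ?thesis by simp
  qed
  have all: "inner (f x) y = inner x z" if "x \<in> A" for x
  proof -
    have "x \<in> span Bs" using that Bs(5) by simp
    then show ?thesis
    proof (rule span_induct)
      show "subspace {x. inner (f x) y = inner x z}"
        unfolding subspace_def using f
        by (auto simp: linear_0 linear_add linear_scale inner_add_left)
    qed (rule base)
  qed
  have uniq: "w = z" if "w \<in> A" "\<forall>x\<in>A. inner (f x) y = inner x w" for w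
  proof -
    have "inner (w - z) (w - z) = 0"
      using that all[of "w - z"] subspace_diff[OF A that(1) zA]
      by (simp add: inner_diff_right)
    then show ?thesis by simp
  qed
  have "adj A f y = z" unfolding adj_def
  proof (rule the_equality)
    show "z \<in> A \<and> (\<forall>x\<in>A. inner (f x) y = inner x z)" using zA all by blast
    show "\<And>w. w \<in> A \<and> (\<forall>x\<in>A. inner (f x) y = inner x w) \<Longrightarrow> w = z" using uniq by blast
  qed
  then show ?thesis using zA all by simp
qed


lemma indep_Un_orth:
  fixes S T :: "'v::euclidean_space set"
  assumes S: "independent S" and T: "independent T"
    and orth: "\<And>x y. x \<in> S \<Longrightarrow> y \<in> T \<Longrightarrow> inner x y = 0"
  shows "independent (S \<union> T)"
proof -
  have fS: "finite S" and fT: "finite T" using S T finiteI_independent by blast+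
  have disj: "S \<inter> T = {}"
  proof (rule ccontr)
    assume "S \<inter> T \<noteq> {}"
    then obtain x where "x \<in> S" "x \<in> T" by blast
    then have "inner x x = 0" using orth by blast
    then have "x = 0" by simp
    then show False using \<open>x \<in> S\<close> S dependent_zero by blast
  qed
  show ?thesis
  proof
    assume "dependent (S \<union> T)"
    then obtain u where u: "\<exists>v\<in>S \<union> T. u v \<noteq> 0" "(\<Sum>v\<in>S \<union> T. u v *\<^sub>R v) = 0"
      using dependent_finite[of "S \<union> T"] fS fT by auto
    define a where "a = (\<Sum>v\<in>S. u v *\<^sub>R v)"
    define b where "b = (\<Sum>v\<in>T. u v *\<^sub>R v)"
    have ab: "a + b = 0" using u(2) disj fS fT unfolding a_def b_def by (simp add: sum.union_disjoint)
    have aS: "a \<in> span S" unfolding a_def by (simp add: span_base span_scale span_sum)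
    have bT: "b \<in> span T" unfolding b_def by (simp add: span_base span_scale span_sum)
    have "orthogonal a y" if "y \<in> T" for y
      using orthogonal_to_span[OF aS, of y] orth that unfolding orthogonal_def by (simp add: inner_commute)
    then have "orthogonal a b" using orthogonal_to_span[OF bT, of a] by blast
    then have "inner a a = 0" using ab unfolding orthogonal_def
      by (metis add_eq_0_iff inner_minus_right neg_equal_0_iff_equal)
    then have a0: "a = 0" by simp
    then have b0: "b = 0" using ab by simp
    have "\<forall>v\<in>S. u v = 0"
      using a0 S fS dependent_finite[of S] unfolding a_def by auto
    moreover have "\<forall>v\<in>T. u v = 0"
      using b0 T fT dependent_finite[of T] unfolding b_def by auto
    ultimately show False using u(1) by blast
  qed
qed

lemma rep_scale_basis:
  assumes "independent S" "w0 \<in> S"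
  shows "representation S (c *\<^sub>R w0) w = (if w = w0 then c else 0)"
  using representation_scale[OF assms(1) span_base[OF assms(2)], of c]
    representation_basis[OF assms] by simp

locale hctx =
  fixes C :: "nat \<Rightarrow> 'v::euclidean_space set" and d :: "nat \<Rightarrow> 'v \<Rightarrow> 'v"
    and R L B :: "nat \<Rightarrow> 'v set" and p :: "nat \<Rightarrow> 'v \<Rightarrow> 'v"
  assumes cc: "chain_complex C d" and hb: "hodge_basis C d R L p B"
begin

abbreviation "A k \<equiv> adj (C (Suc k)) (d k)"

lemma dC: "x \<in> C (Suc n) \<Longrightarrow> d n x \<in> C n"
  using cc unfolding chain_complex_def by blast

lemma sub: "subspace (C n)" and lin: "linear (d n)"
  and dd: "x \<in> C (Suc (Suc n)) \<Longrightarrow> d n (d (Suc n) x) = 0"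
  using cc unfolding chain_complex_def by auto

lemma A_in: "A k y \<in> C (Suc k)" and A_eq: "x \<in> C (Suc k) \<Longrightarrow> inner (d k x) y = inner x (A k y)"
  using adj_props[OF sub lin, of "Suc k" k y] by auto

lemma Rk: "orthonormal_basis_of (R k) (A k ` C k)"
  and Lk: "orthonormal_basis_of (L k) (d k ` C (Suc k))"
  and pk: "bij_betw (p k) (R k) (L k)"
  and sk: "v \<in> R k \<Longrightarrow> \<exists>\<sigma>>0. d k v = \<sigma> *\<^sub>R p k v"
  and Bn: "independent (B n)" "span (B n) = ker_lap C d n"
  using hb unfolding hodge_basis_def by auto

lemma R_sub: "v \<in> R k \<Longrightarrow> \<exists>z\<in>C k. v = A k z" using Rk[of k] unfolding orthonormal_basis_of_def by blast
lemma L_sub: "v \<in> L k \<Longrightarrow> \<exists>y\<in>C (Suc k). v = d k y" using Lk[of k] unfolding orthonormal_basis_of_def by blast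
lemma R_norm: "v \<in> R k \<Longrightarrow> norm v = 1" using Rk unfolding orthonormal_basis_of_def by auto
lemma L_norm: "v \<in> L k \<Longrightarrow> norm v = 1" using Lk unfolding orthonormal_basis_of_def by auto
lemma R_orth: "v \<in> R k \<Longrightarrow> v' \<in> R k \<Longrightarrow> v \<noteq> v' \<Longrightarrow> inner v v' = 0"
  using Rk unfolding orthonormal_basis_of_def pairwise_def orthogonal_def by auto
lemma L_orth: "v \<in> L k \<Longrightarrow> v' \<in> L k \<Longrightarrow> v \<noteq> v' \<Longrightarrow> inner v v' = 0"
  using Lk unfolding orthonormal_basis_of_def pairwise_def orthogonal_def by auto
lemma R_C: "v \<in> R k \<Longrightarrow> v \<in> C (Suc k)" using R_sub A_in by blast
lemma B_ker: "b \<in> B n \<Longrightarrow> b \<in> ker_lap C d n" using Bn span_base by blast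

lemma ker_props:
  assumes "x \<in> ker_lap C d n"
  shows "x \<in> C n" "A n x = 0" "n = Suc k \<Longrightarrow> d k x = 0"
proof -
  show xC: "x \<in> C n" using assms unfolding ker_lap_def by auto
  have lap: "laplacian C d n x = 0" using assms unfolding ker_lap_def by auto
  have bx: "inner (d n (A n x)) x = inner (A n x) (A n x)" using A_eq[OF A_in] .
  have "A n x = 0 \<and> (\<forall>k. n = Suc k \<longrightarrow> d k x = 0)"
  proof (cases n)
    case 0
    then have "d n (A n x) = 0" using lap unfolding laplacian_def by simp
    then have "inner (A n x) (A n x) = 0" using bx by simp
    then show ?thesis using 0 by simp
  next
    case (Suc k)
    have ax: "inner (A k (d k x)) x = inner (d k x) (d k x)"
      using A_eq[of x k "d k x"] xC Suc by (simp add: inner_commute)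
    have "A k (d k x) + d n (A n x) = 0" using lap Suc unfolding laplacian_def by simp
    then have "inner (A k (d k x) + d n (A n x)) x = 0" by simp
    then have "inner (d k x) (d k x) + inner (A n x) (A n x) = 0"
      using ax bx by (simp add: inner_add_left)
    moreover have "inner (d k x) (d k x) \<ge> 0" "inner (A n x) (A n x) \<ge> 0" by simp_all
    ultimately have "inner (d k x) (d k x) = 0" "inner (A n x) (A n x) = 0" by linarith+
    then show ?thesis using Suc by simp
  qed
  then show "A n x = 0" "n = Suc k \<Longrightarrow> d k x = 0" by auto
qed

lemma orth_LR: "w \<in> L (Suc k) \<Longrightarrow> u \<in> R k \<Longrightarrow> inner w u = 0"
proof -
  assume "w \<in> L (Suc k)" "u \<in> R k"
  then obtain y z where y: "y \<in> C (Suc (Suc k))" "w = d (Suc k) y" and z: "z \<in> C k" "u = A k z"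
    using L_sub R_sub by metis
  have "inner w u = inner (d k w) z" using A_eq[of w k z] dC[OF y(1)] y z by (simp)
  also have "\<dots> = 0" using dd[OF y(1)] y by simp
  finally show ?thesis .
qed

lemma orth_RL: assumes "u \<in> R k" "w \<in> L (Suc k)" shows "inner u w = 0"
  using orth_LR[OF assms(2,1)] by (simp add: inner_commute)

lemma orth_LB: "w \<in> L n \<Longrightarrow> b \<in> B n \<Longrightarrow> inner w b = 0"
proof -
  assume "w \<in> L n" "b \<in> B n"
  then obtain y where y: "y \<in> C (Suc n)" "w = d n y" using L_sub by metis
  have "inner w b = inner y (A n b)" using A_eq[OF y(1)] y by simp
  then show ?thesis using ker_props(2)[OF B_ker[OF \<open>b \<in> B n\<close>]] by simp
qed

lemma orth_RB: "u \<in> R k \<Longrightarrow> b \<in> B (Suc k) \<Longrightarrow> inner u b = 0"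
proof -
  assume "u \<in> R k" "b \<in> B (Suc k)"
  then obtain z where z: "z \<in> C k" "u = A k z" using R_sub by metis
  have kb: "b \<in> ker_lap C d (Suc k)" using B_ker[OF \<open>b \<in> B (Suc k)\<close>] .
  have "inner b u = inner (d k b) z" using A_eq[OF ker_props(1)[OF kb]] z by simp
  then show ?thesis using ker_props(3)[OF kb refl] by (simp add: inner_commute)
qed

lemma indep_index: "independent (hodge_index R L B n)"
proof -
  define Ob where "Ob = L n \<union> (case n of 0 \<Rightarrow> {} | Suc k \<Rightarrow> R k)"
  have "pairwise orthogonal Ob"
    unfolding pairwise_def orthogonal_def Ob_def
    by (cases n) (auto simp: L_orth R_orth orth_LR orth_RL)
  moreover have "0 \<notin> Ob" unfolding Ob_def by (cases n) (auto dest: L_norm R_norm)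
  ultimately have iOb: "independent Ob" by (rule pairwise_orthogonal_independent)
  have "independent (Ob \<union> B n)"
    by (rule indep_Un_orth[OF iOb Bn(1)]) (cases n; auto simp: Ob_def orth_LB orth_RB)
  then show ?thesis unfolding hodge_index_def Ob_def .
qed


lemma RL_disj: "v \<in> R k \<Longrightarrow> v \<in> L (Suc k) \<Longrightarrow> False"
  using orth_RL[of v k v] R_norm[of v k] by simp

lemma LB_disj: "v \<in> L n \<Longrightarrow> v \<in> B n \<Longrightarrow> False"
  using orth_LB[of v n v] L_norm[of v n] by simp

lemma RB_disj: "v \<in> R k \<Longrightarrow> v \<in> B (Suc k) \<Longrightarrow> False"
  using orth_RB[of v k v] R_norm[of v k] by simp

lemma d_cases:
  assumes "v \<in> hodge_index R L B (Suc m)"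
  shows "d m v = 0 \<or> (v \<in> R m \<and> (\<exists>\<sigma>>0. d m v = \<sigma> *\<^sub>R p m v))"
proof -
  consider "v \<in> L (Suc m)" | "v \<in> R m" | "v \<in> B (Suc m)"
    using assms unfolding hodge_index_def by auto
  then show ?thesis
  proof cases
    case 1
    then obtain y where "y \<in> C (Suc (Suc m))" "v = d (Suc m) y" using L_sub by metis
    then show ?thesis using dd by simp
  next
    case 2 then show ?thesis using sk by blast
  next
    case 3 then show ?thesis using ker_props(3)[OF B_ker[OF 3] refl] by simp
  qed
qed

lemma src_uniq:
  assumes "v \<in> R k" "w \<in> L k" "w' \<in> L k" "\<sigma> \<noteq> 0" "d k v = \<sigma> *\<^sub>R w" "d k v = \<sigma>' *\<^sub>R w'"
  shows "w = w'"
proof (rule ccontr)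
  assume ne: "w \<noteq> w'"
  have "inner (d k v) w = \<sigma>" using assms(5) L_norm[OF assms(2)] by (simp add: power2_norm_eq_inner[symmetric])
  moreover have "inner (d k v) w = 0" using assms(6) L_orth[OF assms(3) assms(2)] ne by simp
  ultimately show False using assms(4) by simp
qed

lemma tgt_uniq:
  assumes "v \<in> R k" "v' \<in> R k" "\<sigma> \<noteq> 0" "\<sigma>' \<noteq> 0" "d k v = \<sigma> *\<^sub>R w" "d k v' = \<sigma>' *\<^sub>R w"
  shows "v = v'"
proof (rule ccontr)
  assume ne: "v \<noteq> v'"
  define u where "u = \<sigma>' *\<^sub>R v - \<sigma> *\<^sub>R v'"
  have uC: "u \<in> C (Suc k)" unfolding u_def
    using R_C[OF assms(1)] R_C[OF assms(2)] sub by (simp add: subspace_diff subspace_scale)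
  have du: "d k u = 0" unfolding u_def using lin[of k] assms(5,6)
    by (simp add: linear_diff linear_scale)
  obtain z where z: "z \<in> C k" "v = A k z" using R_sub[OF assms(1)] by blast
  have "inner u v = inner (d k u) z" using A_eq[OF uC] z by simp
  then have "inner u v = 0" using du by simp
  moreover have "inner u v = \<sigma>'" unfolding u_def using R_norm[OF assms(1)] R_orth[OF assms(2,1)] ne
    by (simp add: inner_diff_left power2_norm_eq_inner[symmetric])
  ultimately show False using assms(4) by simp
qed

abbreviation "X \<equiv> hodge_cells R L B"
abbreviation "M \<equiv> hodge_matching d R L"
abbreviation "c \<equiv> hodge_coef d R L B"

lemma X_iff: "(n, v) \<in> X \<longleftrightarrow> v \<in> hodge_index R L B n" unfolding hodge_cells_def by simp

lemma M_iff: "((a, b) \<in> M) \<longleftrightarrow> (\<exists>k v w. a = (Suc k, v) \<and> b = (k, w) \<and> v \<in> R k \<and> w \<in> L k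
   \<and> (\<exists>\<sigma>. \<sigma> \<noteq> 0 \<and> d k v = \<sigma> *\<^sub>R w))"
  unfolding hodge_matching_def by auto

lemma M_coef: assumes "((Suc k, v), (k, w)) \<in> M" shows "c (k, w) (Suc k, v) \<noteq> 0"
proof -
  obtain \<sigma> where s: "\<sigma> \<noteq> 0" "d k v = \<sigma> *\<^sub>R w" and w: "w \<in> L k"
    using assms unfolding M_iff by auto
  have "w \<in> hodge_index R L B k" using w unfolding hodge_index_def by auto
  then show ?thesis unfolding hodge_coef_def using s rep_scale_basis[OF indep_index] by simp
qed

lemma G_eq_M: "graph_edges X fst c = M"
proof
  show "M \<subseteq> graph_edges X fst c"
  proof
    fix e assume e: "e \<in> M"
    then obtain k v w where e': "e = ((Suc k, v), (k, w))" "v \<in> R k" "w \<in> L k"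
      unfolding hodge_matching_def by auto
    have "(Suc k, v) \<in> X" "(k, w) \<in> X" using e' unfolding X_iff hodge_index_def by auto
    then show "e \<in> graph_edges X fst c" using M_coef e e' unfolding graph_edges_def by auto
  qed
next
  show "graph_edges X fst c \<subseteq> M"
  proof
    fix e assume e: "e \<in> graph_edges X fst c"
    then obtain m v w where e': "e = ((Suc m, v), (m, w))" "v \<in> hodge_index R L B (Suc m)"
      "c (m, w) (Suc m, v) \<noteq> 0"
      unfolding graph_edges_def by (auto simp: X_iff)
    have cw: "c (m, w) (Suc m, v) = representation (hodge_index R L B m) (d m v) w"
      unfolding hodge_coef_def by simp
    show "e \<in> M"
    proof (cases "d m v = 0")
      case True
      then show ?thesis using e'(3) cw by (simp add: representation_zero)
    next
      case False
      then obtain \<sigma> where s: "v \<in> R m" "\<sigma> > 0" "d m v = \<sigma> *\<^sub>R p m v" using d_cases[OF e'(2)] by blast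
      have pL: "p m v \<in> L m" using pk s(1) bij_betwE by blast
      then have "p m v \<in> hodge_index R L B m" unfolding hodge_index_def by auto
      then have "w = p m v" using e'(3) cw s rep_scale_basis[OF indep_index] by (auto split: if_splits)
      have "\<sigma> \<noteq> 0" using s by simp
      then show ?thesis unfolding e'(1) hodge_matching_def using s pL \<open>w = p m v\<close> by blast
    qed
  qed
qed

lemma rev_eq: "rev_graph X fst c M = M\<inverse>"
  unfolding rev_graph_def G_eq_M by simp

lemma rt_deg: "(a, b) \<in> (M\<inverse>)\<^sup>* \<Longrightarrow> a = b \<or> fst a < fst b"
proof (induction rule: rtrancl_induct)
  case (step y z)
  then have "fst y < fst z" by (auto simp: M_iff)
  then show ?case using step.IH by auto
qed simp

lemma M_disj: "\<forall>e\<in>M. \<forall>e'\<in>M. e \<noteq> e' \<longrightarrow> {fst e, snd e} \<inter> {fst e', snd e'} = {}"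
proof (intro ballI impI)
  fix e e' assume e: "e \<in> M" and e': "e' \<in> M" and ne: "e \<noteq> e'"
  obtain k v w s where E: "e = ((Suc k, v), (k, w))" "v \<in> R k" "w \<in> L k" "s \<noteq> 0" "d k v = s *\<^sub>R w"
    using e unfolding hodge_matching_def by auto
  obtain k' v' w' s' where E': "e' = ((Suc k', v'), (k', w'))" "v' \<in> R k'" "w' \<in> L k'" "s' \<noteq> 0" "d k' v' = s' *\<^sub>R w'"
    using e' unfolding hodge_matching_def by auto
  have 1: "(Suc k, v) \<noteq> (Suc k', v')"
  proof
    assume "(Suc k, v) = (Suc k', v')"
    then have "k = k'" "v = v'" by auto
    then have "w = w'" using src_uniq[OF E(2,3)] E E' by metis
    then show False using ne E E' \<open>k = k'\<close> \<open>v = v'\<close> by simp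
  qed
  have 2: "(k, w) \<noteq> (k', w')"
  proof
    assume "(k, w) = (k', w')"
    then have "k = k'" "w = w'" by auto
    then have "v = v'" using tgt_uniq[OF E(2), of v' s s' w] E E' by metis
    then show False using ne E E' \<open>k = k'\<close> \<open>w = w'\<close> by simp
  qed
  have 3: "(Suc k, v) \<noteq> (k', w')" using RL_disj E(2) E'(3) by auto
  have 4: "(k, w) \<noteq> (Suc k', v')" using RL_disj E'(2) E(3) by auto
  show "{fst e, snd e} \<inter> {fst e', snd e'} = {}" using 1 2 3 4 E E' by auto
qed

lemma crit_eq: "{v. (n, v) \<in> critical X M} = B n"
proof
  show "{v. (n, v) \<in> critical X M} \<subseteq> B n"
  proof
    fix v assume "v \<in> {v. (n, v) \<in> critical X M}"
    then have v: "v \<in> hodge_index R L B n" and nm: "\<forall>(x, y)\<in>M. (n, v) \<noteq> x \<and> (n, v) \<noteq> y"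
      unfolding critical_def by (auto simp: X_iff)
    show "v \<in> B n"
    proof (rule ccontr)
      assume "v \<notin> B n"
      then consider "v \<in> L n" | k where "n = Suc k" "v \<in> R k"
        using v unfolding hodge_index_def by (cases n) auto
      then show False
      proof cases
        case 1
        then obtain v' where v': "v' \<in> R n" "p n v' = v" using pk[of n] by (metis bij_betw_imp_surj_on imageE)
        obtain \<sigma> where "\<sigma> > 0" "d n v' = \<sigma> *\<^sub>R p n v'" using sk[OF v'(1)] by blast
        moreover have "\<sigma> \<noteq> 0" using \<open>\<sigma> > 0\<close> by simp
        ultimately have "((Suc n, v'), (n, v)) \<in> M" using v' 1 unfolding hodge_matching_def by blast
        then show False using nm by auto
      next
        case 2
        obtain \<sigma> where "\<sigma> > 0" "d k v = \<sigma> *\<^sub>R p k v" using sk[OF 2(2)] by blast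
        moreover have "p k v \<in> L k" using pk 2(2) bij_betwE by blast
        moreover have "\<sigma> \<noteq> 0" using \<open>\<sigma> > 0\<close> by simp
        ultimately have "((Suc k, v), (k, p k v)) \<in> M" using 2 unfolding hodge_matching_def by blast
        then show False using nm 2 by auto
      qed
    qed
  qed
next
  show "B n \<subseteq> {v. (n, v) \<in> critical X M}"
  proof
    fix v assume v: "v \<in> B n"
    have "(n, v) \<in> X" using v unfolding X_iff hodge_index_def by auto
    moreover have "\<forall>(x, y)\<in>M. (n, v) \<noteq> x \<and> (n, v) \<noteq> y"
      using v RB_disj LB_disj unfolding hodge_matching_def by auto
    ultimately show "v \<in> {v. (n, v) \<in> critical X M}" unfolding critical_def by auto
  qed
qed

lemma morse: "morse_matching X fst c M"
  unfolding morse_matching_def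
proof (intro conjI allI)
  show "M \<subseteq> graph_edges X fst c" using G_eq_M by simp
  show "\<forall>e\<in>M. \<forall>e'\<in>M. e \<noteq> e' \<longrightarrow> {fst e, snd e} \<inter> {fst e', snd e'} = {}" by (rule M_disj)
  show "\<forall>(a, b)\<in>M. c b a \<noteq> 0" using M_coef by (auto simp: M_iff)
  fix n
  let ?A = "{a \<in> X. fst a = n}"
  have eq: "{(a, b). a \<in> X \<and> b \<in> X \<and> fst a = n \<and> fst b = n \<and> (a, b) \<in> (rev_graph X fst c M)\<^sup>*}
     = Id_on ?A"
  proof
    show "Id_on ?A \<subseteq> {(a, b). a \<in> X \<and> b \<in> X \<and> fst a = n \<and> fst b = n \<and> (a, b) \<in> (rev_graph X fst c M)\<^sup>*}"
      by (auto simp: Id_on_def)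
    show "{(a, b). a \<in> X \<and> b \<in> X \<and> fst a = n \<and> fst b = n \<and> (a, b) \<in> (rev_graph X fst c M)\<^sup>*} \<subseteq> Id_on ?A"
    proof (rule subsetI)
      fix e assume "e \<in> {(a, b). a \<in> X \<and> b \<in> X \<and> fst a = n \<and> fst b = n \<and> (a, b) \<in> (rev_graph X fst c M)\<^sup>*}"
      then obtain a b where e: "e = (a, b)" "a \<in> X" "fst a = n" "fst b = n" "(a, b) \<in> (M\<inverse>)\<^sup>*"
        unfolding rev_eq by blast
      from rt_deg[OF e(5)] have "a = b" using e by simp
      then show "e \<in> Id_on ?A" using e by (simp add: Id_on_def)
    qed
  qed
  show "partial_order_on ?A
     {(a, b). a \<in> X \<and> b \<in> X \<and> fst a = n \<and> fst b = n \<and> (a, b) \<in> (rev_graph X fst c M)\<^sup>*}"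
    unfolding eq partial_order_on_def preorder_on_def refl_on_def trans_def antisym_def by auto
qed

lemma boundary: "a \<in> critical X M \<Longrightarrow> morse_boundary X fst c M a = (\<lambda>_. 0)"
proof
  fix b assume a: "a \<in> critical X M"
  have "{q. is_path (rev_graph X fst c M) q a b} = {}" if "fst a = Suc (fst b)"
  proof (rule ccontr)
    assume "{q. is_path (rev_graph X fst c M) q a b} \<noteq> {}"
    then obtain q where q: "is_path (M\<inverse>) q a b" unfolding rev_eq by auto
    show False
    proof (cases "length q")
      case 0 then show ?thesis using q unfolding is_path_def by simp
    next
      case (Suc l)
      show ?thesis
      proof (cases l)
        case 0
        then have "q = [a]" using q Suc unfolding is_path_def by (cases q) auto
        then have "a = b" using q unfolding is_path_def by simp
        then show ?thesis using that by simp
      next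
        case (Suc l')
        then have "(q ! 0, q ! 1) \<in> M\<inverse>" using q \<open>length q = Suc l\<close> unfolding is_path_def by auto
        moreover have "q ! 0 = a" using q unfolding is_path_def by (cases q) auto
        ultimately have "(q ! 1, a) \<in> M" by simp
        then show ?thesis using a unfolding critical_def by fast
      qed
    qed
  qed
  then show "morse_boundary X fst c M a b = 0"
    unfolding morse_boundary_def Gamma_def by auto
qed

end

theorem mainTheorem4:
  fixes C :: "nat \<Rightarrow> 'v::euclidean_space set" and d :: "nat \<Rightarrow> 'v \<Rightarrow> 'v"
    and R L B :: "nat \<Rightarrow> 'v set" and p :: "nat \<Rightarrow> 'v \<Rightarrow> 'v"
  assumes "chain_complex C d" and "finite_type C" and "hodge_basis C d R L p B"
  shows "morse_matching (hodge_cells R L B) fst (hodge_coef d R L B) (hodge_matching d R L)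
    \<and> (\<forall>n. span {v. (n, v) \<in> critical (hodge_cells R L B) (hodge_matching d R L)} = ker_lap C d n)
    \<and> (\<forall>a \<in> critical (hodge_cells R L B) (hodge_matching d R L).
         morse_boundary (hodge_cells R L B) fst (hodge_coef d R L B) (hodge_matching d R L) a = (\<lambda>_. 0))"
proof -
  interpret hctx C d R L B p using assms(1,3) by unfold_locales
  show ?thesis using morse crit_eq Bn(2) boundary by simp
qed

end
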